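(* Let $X$ be any one of the random Fibonacci subshift $X_{\vartheta_1}$, the random tribonacci subshift $X_\tau$, or the degree-$m$ random metallic mean subshift $X_{\vartheta_m}$ ($m\ge2$). Then $X$ is semi-mixing with respect to the set $\mathcal{S}=\{a\}$ of length-one words.
   Context: For a random substitution $\vartheta$ (a map assigning to each letter a non-empty finite set of non-empty words, extended to words via set concatenation $\vartheta(w_1\cdots w_k)=\vartheta(w_1)\cdots\vartheta(w_k)$), a word is $\vartheta$-legal if it is a subword of some word in $\vartheta^k(a)$ for some $k\ge0$ and letter $a$. $X_\vartheta$ is the set of bi-infinite sequences all of whose finite subwords are $\vartheta$-legal; $\mathcal{L}$ is its language (set of finite subwords of its elements), $\mathcal{L}^\ell$ those of length $\ell$. A subshift is semi-mixing with respect to $\mathcal{S}\subsetneq\mathcal{L}^\ell$ if for every $w\in\mathcal{L}$ there is $N$ such that for every $n\ge N$ there exist a word $u$ of length $n$ and $s\in\mathcal{S}$ with $wus\in\mathcal{L}$. $\vartheta_1\colon a\mapsto\{ab,ba\},\ b\mapsto\{a\}$; $\tau\colon a\mapsto\{ab,ba\},\ b\mapsto\{ac,ca\},\ c\mapsto\{a\}$; $\vartheta_m\colon a\mapsto\{a^iba^{m-i}\mid0\le i\le m\},\ b\mapsto\{a\}$. *)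

theory Defs
  imports Main "HOL-Library.Sublist"
begin

fun subst_word :: "('a \<Rightarrow> 'a list set) \<Rightarrow> 'a list \<Rightarrow> 'a list set" where
  "subst_word \<theta> [] = {[]}"
| "subst_word \<theta> (x # xs) = {u @ v | u v. u \<in> \<theta> x \<and> v \<in> subst_word \<theta> xs}"

definition subst_set :: "('a \<Rightarrow> 'a list set) \<Rightarrow> 'a list set \<Rightarrow> 'a list set" where
  "subst_set \<theta> W = (\<Union>w\<in>W. subst_word \<theta> w)"

definition subst_iter :: "('a \<Rightarrow> 'a list set) \<Rightarrow> nat \<Rightarrow> 'a \<Rightarrow> 'a list set" where
  "subst_iter \<theta> k a = (subst_set \<theta> ^^ k) {[a]}"

definition legal :: "('a \<Rightarrow> 'a list set) \<Rightarrow> 'a list \<Rightarrow> bool" where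
  "legal \<theta> w \<longleftrightarrow> (\<exists>k a. \<exists>v\<in>subst_iter \<theta> k a. sublist w v)"

definition factor :: "(int \<Rightarrow> 'a) \<Rightarrow> int \<Rightarrow> nat \<Rightarrow> 'a list" where
  "factor x i n = map (\<lambda>j. x (i + int j)) [0..<n]"

definition subshift :: "('a \<Rightarrow> 'a list set) \<Rightarrow> (int \<Rightarrow> 'a) set" where
  "subshift \<theta> = {x. \<forall>i n. legal \<theta> (factor x i n)}"

definition lang :: "(int \<Rightarrow> 'a) set \<Rightarrow> 'a list set" where
  "lang X = {w. \<exists>x\<in>X. \<exists>i. w = factor x i (length w)}"

definition lang_len :: "(int \<Rightarrow> 'a) set \<Rightarrow> nat \<Rightarrow> 'a list set" where
  "lang_len X l = {w \<in> lang X. length w = l}"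

definition semi_mixing :: "(int \<Rightarrow> 'a) set \<Rightarrow> 'a list set \<Rightarrow> nat \<Rightarrow> bool" where
  "semi_mixing X S l \<longleftrightarrow> S \<subset> lang_len X l \<and>
     (\<forall>w\<in>lang X. \<exists>N. \<forall>n\<ge>N. \<exists>u s. length u = n \<and> s \<in> S \<and> w @ u @ s \<in> lang X)"

datatype ab = A | B
datatype abc = A3 | B3 | C3

fun fib_subst :: "ab \<Rightarrow> ab list set" where
  "fib_subst A = {[A, B], [B, A]}"
| "fib_subst B = {[A]}"

fun trib_subst :: "abc \<Rightarrow> abc list set" where
  "trib_subst A3 = {[A3, B3], [B3, A3]}"
| "trib_subst B3 = {[A3, C3], [C3, A3]}"
| "trib_subst C3 = {[A3]}"

fun metallic_subst :: "nat \<Rightarrow> ab \<Rightarrow> ab list set" where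
  "metallic_subst m A = {replicate i A @ [B] @ replicate (m - i) A | i. i \<le> m}"
| "metallic_subst m B = {[A]}"

end

theory Submission imports Defs begin

definition iterW :: "('a \<Rightarrow> 'a list set) \<Rightarrow> nat \<Rightarrow> 'a list \<Rightarrow> 'a list set" where
  "iterW \<theta> K z = (subst_set \<theta> ^^ K) {z}"

lemma subst_word_append:
  "subst_word \<theta> (u @ v) = {p @ q | p q. p \<in> subst_word \<theta> u \<and> q \<in> subst_word \<theta> v}"
proof (induction u)
  case Nil thus ?case by simp
next
  case (Cons x u)
  have mc: "\<And>a b. a \<in> \<theta> x \<Longrightarrow> b \<in> subst_word \<theta> u \<Longrightarrow> a @ b \<in> subst_word \<theta> (x # u)"
    by (simp only: subst_word.simps mem_Collect_eq) blast
  have mc2: "\<And>a r. a \<in> \<theta> x \<Longrightarrow> r \<in> subst_word \<theta> (u @ v) \<Longrightarrow> a @ r \<in> subst_word \<theta> ((x # u) @ v)"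
    by (simp only: append_Cons subst_word.simps mem_Collect_eq) blast
  show ?case
  proof (rule set_eqI, rule iffI)
    fix w assume "w \<in> subst_word \<theta> ((x # u) @ v)"
    then obtain a r where ar: "w = a @ r" "a \<in> \<theta> x" "r \<in> subst_word \<theta> (u @ v)"
      by (simp only: append_Cons subst_word.simps mem_Collect_eq) blast
    then obtain b c where "r = b @ c" "b \<in> subst_word \<theta> u" "c \<in> subst_word \<theta> v"
      by (simp only: Cons.IH mem_Collect_eq) blast
    then have "w = (a @ b) @ c" "a @ b \<in> subst_word \<theta> (x # u)" using ar mc by auto
    then show "w \<in> {p @ q |p q. p \<in> subst_word \<theta> (x # u) \<and> q \<in> subst_word \<theta> v}"
      using \<open>c \<in> subst_word \<theta> v\<close> by blast
  next
    fix w assume "w \<in> {p @ q |p q. p \<in> subst_word \<theta> (x # u) \<and> q \<in> subst_word \<theta> v}"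
    then obtain p c where pc: "w = p @ c" "p \<in> subst_word \<theta> (x # u)" "c \<in> subst_word \<theta> v"
      by blast
    then obtain a b where ab: "p = a @ b" "a \<in> \<theta> x" "b \<in> subst_word \<theta> u"
      by (simp only: subst_word.simps mem_Collect_eq) blast
    have "b @ c \<in> subst_word \<theta> (u @ v)" using ab pc by (simp only: Cons.IH mem_Collect_eq) blast
    then have "a @ (b @ c) \<in> subst_word \<theta> ((x # u) @ v)" using mc2 ab by blast
    then show "w \<in> subst_word \<theta> ((x # u) @ v)" using pc ab by simp
  qed
qed

lemma funpow_subst_set: "(subst_set \<theta> ^^ K) S = (\<Union>z\<in>S. iterW \<theta> K z)"
proof (induction K arbitrary: S)
  case 0 thus ?case by (auto simp: iterW_def)
next
  case (Suc K)
  have "(subst_set \<theta> ^^ Suc K) S = subst_set \<theta> (\<Union>z\<in>S. iterW \<theta> K z)" by (simp add: Suc)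
  also have "\<dots> = (\<Union>z\<in>S. subst_set \<theta> (iterW \<theta> K z))" by (auto simp: subst_set_def)
  also have "\<dots> = (\<Union>z\<in>S. iterW \<theta> (Suc K) z)" by (simp add: iterW_def)
  finally show ?case .
qed

lemma iterW_Suc: "iterW \<theta> (Suc K) z = subst_set \<theta> (iterW \<theta> K z)"
  by (simp add: iterW_def)

lemma iterW_0[simp]: "iterW \<theta> 0 z = {z}" by (simp add: iterW_def)

lemma iterW_append:
  "iterW \<theta> K (u @ v) = {p @ q | p q. p \<in> iterW \<theta> K u \<and> q \<in> iterW \<theta> K v}"
proof (induction K arbitrary: u v)
  case 0 show ?case by (simp only: iterW_0 singleton_iff) blast
next
  case (Suc K)
  show ?case
  proof (rule set_eqI, rule iffI)
    fix e assume "e \<in> iterW \<theta> (Suc K) (u @ v)"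
    then obtain y where y: "y \<in> iterW \<theta> K (u @ v)" "e \<in> subst_word \<theta> y"
      unfolding iterW_Suc subst_set_def by blast
    have "y \<in> {p @ q |p q. p \<in> iterW \<theta> K u \<and> q \<in> iterW \<theta> K v}" using y(1) Suc.IH by simp
    then obtain p q where pq: "y = p @ q" "p \<in> iterW \<theta> K u" "q \<in> iterW \<theta> K v"
      by (auto simp only: mem_Collect_eq)
    have "e \<in> {p' @ q' |p' q'. p' \<in> subst_word \<theta> p \<and> q' \<in> subst_word \<theta> q}"
      using y(2) pq(1) subst_word_append by metis
    then obtain p' q' where "e = p' @ q'" "p' \<in> subst_word \<theta> p" "q' \<in> subst_word \<theta> q"
      by (auto simp only: mem_Collect_eq)
    moreover have "p' \<in> iterW \<theta> (Suc K) u" "q' \<in> iterW \<theta> (Suc K) v"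
      using calculation pq unfolding iterW_Suc subst_set_def by blast+
    ultimately show "e \<in> {p @ q |p q. p \<in> iterW \<theta> (Suc K) u \<and> q \<in> iterW \<theta> (Suc K) v}" by blast
  next
    fix e assume "e \<in> {p @ q |p q. p \<in> iterW \<theta> (Suc K) u \<and> q \<in> iterW \<theta> (Suc K) v}"
    then obtain p' q' where e: "e = p' @ q'" "p' \<in> iterW \<theta> (Suc K) u" "q' \<in> iterW \<theta> (Suc K) v" by blast
    then obtain p q where "p \<in> iterW \<theta> K u" "p' \<in> subst_word \<theta> p" "q \<in> iterW \<theta> K v" "q' \<in> subst_word \<theta> q"
      unfolding iterW_Suc subst_set_def by blast
    moreover have "p @ q \<in> iterW \<theta> K (u @ v)" using calculation Suc.IH[of u v] by blast
    moreover have "e \<in> subst_word \<theta> (p @ q)" using calculation e subst_word_append[of \<theta> p q] by blast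
    ultimately show "e \<in> iterW \<theta> (Suc K) (u @ v)" unfolding iterW_Suc subst_set_def by blast
  qed
qed

lemma iterW_add: "iterW \<theta> (K + M) z = (\<Union>z'\<in>iterW \<theta> M z. iterW \<theta> K z')"
proof -
  have "iterW \<theta> (K + M) z = (subst_set \<theta> ^^ K) (iterW \<theta> M z)"
    by (simp only: iterW_def funpow_add o_apply)
  also have "\<dots> = (\<Union>z'\<in>iterW \<theta> M z. iterW \<theta> K z')" by (rule funpow_subst_set)
  finally show ?thesis .
qed

lemma iterW_Nil[simp]: "iterW \<theta> K [] = {[]}"
  by (induction K) (auto simp: iterW_Suc subst_set_def)

lemma subst_word_len: "(\<And>x e. e \<in> \<theta> x \<Longrightarrow> e \<noteq> []) \<Longrightarrow> e \<in> subst_word \<theta> z \<Longrightarrow> length z \<le> length e"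
proof (induction z arbitrary: e)
  case Nil thus ?case by simp
next
  case (Cons x z)
  then obtain u v where "e = u @ v" "u \<in> \<theta> x" "v \<in> subst_word \<theta> z" by auto
  with Cons show ?case by (cases u) fastforce+
qed

lemma iterW_len: "(\<And>x e. e \<in> \<theta> x \<Longrightarrow> e \<noteq> []) \<Longrightarrow> e \<in> iterW \<theta> K z \<Longrightarrow> length z \<le> length e"
proof (induction K arbitrary: e)
  case 0 thus ?case by simp
next
  case (Suc K)
  then obtain e' where "e' \<in> iterW \<theta> K z" "e \<in> subst_word \<theta> e'" by (auto simp: iterW_Suc subst_set_def)
  with Suc subst_word_len[of \<theta> e e'] show ?case by fastforce
qed

lemma subst_word_ne: "(\<And>x. \<theta> x \<noteq> {}) \<Longrightarrow> subst_word \<theta> z \<noteq> {}"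
  by (induction z) auto

lemma iterW_ne: "(\<And>x. \<theta> x \<noteq> {}) \<Longrightarrow> iterW \<theta> K z \<noteq> {}"
proof (induction K)
  case (Suc K)
  then obtain e where "e \<in> iterW \<theta> K z" by auto
  moreover obtain f where "f \<in> subst_word \<theta> e" using subst_word_ne[of \<theta> e] Suc.prems by auto
  ultimately show ?case by (auto simp: iterW_Suc subst_set_def)
qed simp

definition sig :: "('a \<Rightarrow> 'a list set) \<Rightarrow> nat \<Rightarrow> 'a list \<Rightarrow> 'a list" where
  "sig \<theta> K z = concat (map (\<lambda>x. SOME e. e \<in> iterW \<theta> K [x]) z)"

lemma sig_append[simp]: "sig \<theta> K (u @ v) = sig \<theta> K u @ sig \<theta> K v"
  by (simp add: sig_def)

lemma sig_mem: "(\<And>x. \<theta> x \<noteq> {}) \<Longrightarrow> sig \<theta> K z \<in> iterW \<theta> K z"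
proof (induction z)
  case Nil thus ?case by (simp add: sig_def)
next
  case (Cons x z)
  have "(SOME e. e \<in> iterW \<theta> K [x]) \<in> iterW \<theta> K [x]"
    using iterW_ne[of \<theta> K "[x]"] Cons.prems by (meson ex_in_conv someI_ex)
  moreover have "sig \<theta> K (x # z) = (SOME e. e \<in> iterW \<theta> K [x]) @ sig \<theta> K z" by (simp add: sig_def)
  ultimately show ?case using Cons iterW_append[of \<theta> K "[x]" z] by auto
qed


fun Lw :: "('a \<Rightarrow> 'a list set) \<Rightarrow> nat \<Rightarrow> 'a list \<Rightarrow> nat \<Rightarrow> 'a list" where
  "Lw \<theta> k s 0 = []"
| "Lw \<theta> k s (Suc j) = sig \<theta> k (Lw \<theta> k s j) @ s"

fun Rw :: "('a \<Rightarrow> 'a list set) \<Rightarrow> nat \<Rightarrow> 'a list \<Rightarrow> nat \<Rightarrow> 'a list" where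
  "Rw \<theta> k t 0 = []"
| "Rw \<theta> k t (Suc j) = t @ sig \<theta> k (Rw \<theta> k t j)"

lemma Lw_suffix: "\<exists>p. Lw \<theta> k s (Suc j) = p @ Lw \<theta> k s j"
proof (induction j)
  case 0 thus ?case by (simp add: sig_def)
next
  case (Suc j)
  then obtain p where "Lw \<theta> k s (Suc j) = p @ Lw \<theta> k s j" by blast
  then have "Lw \<theta> k s (Suc (Suc j)) = sig \<theta> k p @ Lw \<theta> k s (Suc j)" by simp
  thus ?case by blast
qed

lemma Rw_prefix: "\<exists>p. Rw \<theta> k t (Suc j) = Rw \<theta> k t j @ p"
proof (induction j)
  case 0 thus ?case by (simp add: sig_def)
next
  case (Suc j)
  then obtain p where "Rw \<theta> k t (Suc j) = Rw \<theta> k t j @ p" by blast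
  then have "Rw \<theta> k t (Suc (Suc j)) = Rw \<theta> k t (Suc j) @ sig \<theta> k p" by simp
  thus ?case by blast
qed

lemma sig_len: "(\<And>x. \<theta> x \<noteq> {}) \<Longrightarrow> (\<And>x e. e \<in> \<theta> x \<Longrightarrow> e \<noteq> []) \<Longrightarrow> length z \<le> length (sig \<theta> K z)"
  using iterW_len sig_mem by blast

lemma Lw_len: "(\<And>x. \<theta> x \<noteq> {}) \<Longrightarrow> (\<And>x e. e \<in> \<theta> x \<Longrightarrow> e \<noteq> []) \<Longrightarrow> s \<noteq> [] \<Longrightarrow> j \<le> length (Lw \<theta> k s j)"
proof (induction j)
  case (Suc j)
  then show ?case using sig_len[of \<theta> "Lw \<theta> k s j" k] by (cases s) auto
qed simp

lemma Rw_len: "(\<And>x. \<theta> x \<noteq> {}) \<Longrightarrow> (\<And>x e. e \<in> \<theta> x \<Longrightarrow> e \<noteq> []) \<Longrightarrow> t \<noteq> [] \<Longrightarrow> j \<le> length (Rw \<theta> k t j)"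
proof (induction j)
  case (Suc j)
  then show ?case using sig_len[of \<theta> "Rw \<theta> k t j" k] by (cases t) auto
qed simp

lemma RwS_len:
  assumes ne: "\<And>x. \<theta> x \<noteq> {}" and nn: "\<And>x e. e \<in> \<theta> x \<Longrightarrow> e \<noteq> []" and tne: "t \<noteq> []"
  shows "j \<le> length (sig \<theta> K (Rw \<theta> k t j))"
proof -
  have "j \<le> length (Rw \<theta> k t j)" using ne nn tne by (rule Rw_len)
  moreover have "length (Rw \<theta> k t j) \<le> length (sig \<theta> K (Rw \<theta> k t j))" using ne nn by (rule sig_len)
  ultimately show ?thesis by linarith
qed

lemma app_mem: "p \<in> iterW \<theta> K u \<Longrightarrow> q \<in> iterW \<theta> K v \<Longrightarrow> p @ q \<in> iterW \<theta> K (u @ v)"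
  by (simp only: iterW_append mem_Collect_eq) blast

lemma iterW_mono_sub:
  assumes "z \<in> iterW \<theta> M w" "y \<in> iterW \<theta> K z" shows "y \<in> iterW \<theta> (K + M) w"
  using assms by (simp only: iterW_add) blast

lemma W_mem:
  assumes ne: "\<And>x. \<theta> x \<noteq> {}" and sat: "s @ [a] @ t \<in> iterW \<theta> k [a]"
  shows "Lw \<theta> k s j @ [a] @ Rw \<theta> k t j \<in> iterW \<theta> (k * j) [a]"
proof (induction j)
  case 0 thus ?case by simp
next
  case (Suc j)
  have "sig \<theta> k (Lw \<theta> k s j) @ (s @ [a] @ t) @ sig \<theta> k (Rw \<theta> k t j)
        \<in> iterW \<theta> k (Lw \<theta> k s j @ [a] @ Rw \<theta> k t j)"
    by (intro app_mem sig_mem[where \<theta>=\<theta>, OF ne] sat)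
  hence "Lw \<theta> k s (Suc j) @ [a] @ Rw \<theta> k t (Suc j) \<in> iterW \<theta> k (Lw \<theta> k s j @ [a] @ Rw \<theta> k t j)"
    by simp
  from iterW_mono_sub[OF Suc this] show ?case by (simp add: add.commute)
qed

lemma sublist_factor:
  assumes "factor x i n = p @ w @ q" shows "w = factor x (i + int (length p)) (length w)"
proof (rule nth_equalityI)
  show "length w = length (factor x (i + int (length p)) (length w))" by (simp add: factor_def)
  fix k assume k: "k < length w"
  have l: "length (factor x i n) = n" by (simp add: factor_def)
  have "w ! k = (p @ w @ q) ! (length p + k)" using k by (simp add: nth_append)
  also have "\<dots> = factor x i n ! (length p + k)" using assms by simp
  also have "\<dots> = x (i + int (length p + k))"
  proof -
    have "length p + k < n" using l assms k by (metis length_append add_less_cancel_left trans_less_add1)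
    thus ?thesis unfolding factor_def by simp
  qed
  finally show "w ! k = factor x (i + int (length p)) (length w) ! k" using k by (simp add: factor_def add.assoc)
qed

lemma lang_sublist:
  assumes "x \<in> X" "sublist w (factor x i n)" shows "w \<in> lang X"
  using assms sublist_factor unfolding lang_def sublist_def by blast

lemma legal_iff: "legal \<theta> w \<longleftrightarrow> (\<exists>k a. \<exists>v\<in>iterW \<theta> k [a]. sublist w v)"
  by (simp add: legal_def subst_iter_def iterW_def)

lemma lang_legal: "w \<in> lang (subshift \<theta>) \<Longrightarrow> legal \<theta> w"
  unfolding lang_def subshift_def by (auto simp del: legal_def) metis


lemma lemmaG:
  assumes ne: "\<And>x. \<theta> x \<noteq> {}" and nn: "\<And>x e. e \<in> \<theta> x \<Longrightarrow> e \<noteq> []"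
    and sat: "s @ [a] @ t \<in> iterW \<theta> k [a]" and sne: "s \<noteq> []" and tne: "t \<noteq> []"
    and y: "y \<in> iterW \<theta> K [a]" and w: "sublist w y"
  shows "w \<in> lang (subshift \<theta>)"
proof -
  define Q where "Q j = sig \<theta> K (Lw \<theta> k s j)" for j
  define P where "P j = y @ sig \<theta> K (Rw \<theta> k t j)" for j
  define Y where "Y j = Q j @ P j" for j
  have Ymem: "Y j \<in> iterW \<theta> (K + k * j) [a]" for j
  proof -
    have "Y j \<in> iterW \<theta> K (Lw \<theta> k s j @ [a] @ Rw \<theta> k t j)"
      unfolding Y_def Q_def P_def by (intro app_mem sig_mem[where \<theta>=\<theta>, OF ne] y)
    thus ?thesis using iterW_mono_sub W_mem[where \<theta>=\<theta>, OF ne sat] by blast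
  qed
  have step: "\<exists>q' p'. Q (Suc j) = q' @ Q j \<and> P (Suc j) = P j @ p'" for j
  proof -
    obtain p1 where e1: "Lw \<theta> k s (Suc j) = p1 @ Lw \<theta> k s j" using Lw_suffix by blast
    obtain p2 where e2: "Rw \<theta> k t (Suc j) = Rw \<theta> k t j @ p2" using Rw_prefix by blast
    have h1: "Q (Suc j) = sig \<theta> K p1 @ Q j" unfolding Q_def by (simp only: e1 sig_append)
    have h2: "P (Suc j) = P j @ sig \<theta> K p2" unfolding P_def by (simp only: e2 sig_append append_assoc)
    show ?thesis by (rule exI[of _ "sig \<theta> K p1"], rule exI[of _ "sig \<theta> K p2"], rule conjI[OF h1 h2])
  qed
  have lQ: "j \<le> length (Q j)" for j
  proof -
    have a1: "j \<le> length (Lw \<theta> k s j)" using ne nn sne by (rule Lw_len)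
    have a2: "length (Lw \<theta> k s j) \<le> length (sig \<theta> K (Lw \<theta> k s j))" using ne nn by (rule sig_len)
    show ?thesis unfolding Q_def using a1 a2 by linarith
  qed
  have lP: "j \<le> length (P j)" for j
  proof -
    have "j \<le> length (sig \<theta> K (Rw \<theta> k t j))"
      using ne nn tne by (rule RwS_len)
    thus ?thesis unfolding P_def by simp
  qed
  define val where "val j i = Y j ! nat (int (length (Q j)) + i)" for j i
  have vstep: "val (Suc j) i = val j i" if "\<bar>i\<bar> < int j" for j i
  proof -
    obtain q' p' where e: "Q (Suc j) = q' @ Q j" "P (Suc j) = P j @ p'" using step by blast
    have "Y (Suc j) = q' @ Y j @ p'" unfolding Y_def e by simp
    moreover have "nat (int (length (Q (Suc j))) + i) = length q' + nat (int (length (Q j)) + i)"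
      using e lQ[of j] that by auto
    moreover have "nat (int (length (Q j)) + i) < length (Y j)"
      using lQ[of j] lP[of j] that unfolding Y_def by auto
    ultimately show ?thesis unfolding val_def by (simp add: nth_append)
  qed
  have vmono: "val j' i = val j i" if "\<bar>i\<bar> < int j" "j \<le> j'" for j j' i
    using that(2)
  proof (induction j' rule: dec_induct)
    case (step m)
    then show ?case using vstep[of i m] that(1) by simp
  qed simp
  define x where "x i = val (nat \<bar>i\<bar> + 1) i" for i
  have xv: "x i = val j i" if "\<bar>i\<bar> < int j" for i j
    unfolding x_def using vmono[of i "nat \<bar>i\<bar> + 1" j] that by simp
  have fac: "sublist (factor x i n) (Y (nat \<bar>i\<bar> + n + 1))" for i n
  proof -
    define j where "j = nat \<bar>i\<bar> + n + 1"
    define off where "off = nat (int (length (Q j)) + i)"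
    have h0: "int (length (Q j)) \<ge> int j" "int (length (P j)) \<ge> int j" using lQ[of j] lP[of j] by auto
    have hj: "int j = \<bar>i\<bar> + int n + 1" unfolding j_def by simp
    have hi: "-\<bar>i\<bar> \<le> i" "i \<le> \<bar>i\<bar>" by auto
    have ho: "int off = int (length (Q j)) + i" unfolding off_def using h0 hj hi by simp
    have "int off + int n \<le> int (length (Q j)) + int (length (P j))" using h0 hj ho hi by linarith
    hence len: "off + n \<le> length (Y j)" unfolding Y_def by simp
    have "factor x i n = take n (drop off (Y j))"
    proof (rule nth_equalityI)
      show "length (factor x i n) = length (take n (drop off (Y j)))" using len by (simp add: factor_def)
      fix m assume m: "m < length (factor x i n)"
      hence m': "m < n" by (simp add: factor_def)
      have "factor x i n ! m = x (i + int m)" using m' by (simp add: factor_def)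
      also have "\<dots> = val j (i + int m)" using m' by (intro xv) (auto simp: j_def)
      also have "\<dots> = Y j ! (off + m)"
      proof -
        have "nat (int (length (Q j)) + (i + int m)) = off + m" using ho h0 hj hi by linarith
        thus ?thesis unfolding val_def by simp
      qed
      also have "\<dots> = take n (drop off (Y j)) ! m" using m' len by simp
      finally show "factor x i n ! m = take n (drop off (Y j)) ! m" .
    qed
    hence "sublist (factor x i n) (Y j)"
      by (metis append_take_drop_id sublist_appendI sublist_order.order.trans sublist_take prefix_imp_sublist)
    thus ?thesis unfolding j_def .
  qed
  have xin: "x \<in> subshift \<theta>"
    unfolding subshift_def legal_iff using fac Ymem by blast
  have "factor x 0 (length y) = y"
  proof (rule nth_equalityI)
    fix m assume m: "m < length (factor x 0 (length y))"
    hence m': "m < length y" by (simp add: factor_def)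
    define j where "j = length y + 1"
    have "factor x 0 (length y) ! m = val j (int m)" using m' xv[of "int m" j] by (simp add: factor_def j_def)
    also have "\<dots> = y ! m"
    proof -
      have "nat (int (length (Q j)) + int m) = length (Q j) + m" by (metis nat_int of_nat_add)
      thus ?thesis unfolding val_def Y_def P_def using m' by (simp add: nth_append)
    qed
    finally show "factor x 0 (length y) ! m = y ! m" .
  qed (simp add: factor_def)
  thus ?thesis using lang_sublist[OF xin, of w 0 "length y"] w by simp
qed


lemma embed:
  assumes ne: "\<And>x. \<theta> x \<noteq> {}" and c: "c \<in> set z" and v: "v \<in> iterW \<theta> K [c]"
  shows "\<exists>z'\<in>iterW \<theta> K z. sublist v z'"
proof -
  obtain z1 z2 where z: "z = z1 @ [c] @ z2" using c split_list by fastforce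
  have "sig \<theta> K z1 @ v @ sig \<theta> K z2 \<in> iterW \<theta> K z"
    unfolding z by (intro app_mem sig_mem[where \<theta>=\<theta>, OF ne] v)
  thus ?thesis by blast
qed

theorem generic_semi_mixing:
  assumes ne: "\<And>x. \<theta> x \<noteq> {}" and nn: "\<And>x e. e \<in> \<theta> x \<Longrightarrow> e \<noteq> []"
    and sat: "s @ [a] @ t \<in> iterW \<theta> k [a]" and sne: "s \<noteq> []" and tne: "t \<noteq> []"
    and reach: "\<And>c. \<exists>m z. z \<in> iterW \<theta> m [a] \<and> c \<in> set z"
    and posA: "\<And>z p. p < length z \<Longrightarrow> \<exists>\<rho>\<in>subst_word \<theta> z. p < length \<rho> \<and> \<rho> ! p = A0"
    and other: "b \<noteq> A0"
  shows "semi_mixing (subshift \<theta>) {[A0]} 1"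
proof -
  let ?X = "subshift \<theta>"
  have letter: "[c] \<in> lang ?X" for c
  proof -
    obtain m z where "z \<in> iterW \<theta> m [a]" "c \<in> set z" using reach by blast
    moreover have "sublist [c] z" using \<open>c \<in> set z\<close> by (metis split_list sublist_appendI append_Cons append_Nil)
    ultimately show ?thesis
      apply -
      apply (rule lemmaG[where \<theta>=\<theta> and y=z and K=m])
            apply (rule ne) apply (erule nn) apply (rule sat) apply (rule sne) apply (rule tne)
      by assumption+
  qed
  have k0: "k \<noteq> 0"
  proof
    assume "k = 0"
    hence "length (s @ [a] @ t) = 1" using sat by simp
    thus False using sne by (cases s) auto
  qed
  have mix: "\<exists>N. \<forall>n\<ge>N. \<exists>u s'. length u = n \<and> s' \<in> {[A0]} \<and> w @ u @ s' \<in> lang ?X"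
    if wl: "w \<in> lang ?X" for w
  proof -
    obtain k0 c v where v: "v \<in> iterW \<theta> k0 [c]" "sublist w v"
      using lang_legal[OF wl] unfolding legal_iff by blast
    obtain m z where z: "z \<in> iterW \<theta> m [a]" "c \<in> set z" using reach by blast
    obtain z' where z': "z' \<in> iterW \<theta> k0 z" "sublist v z'" using embed[where \<theta>=\<theta>, OF ne z(2) v(1)] by blast
    have z'a: "z' \<in> iterW \<theta> (k0 + m) [a]" using iterW_mono_sub z(1) z'(1) by blast
    obtain y where y: "y \<in> iterW \<theta> (k0 + m) (s @ [a] @ t)" "sublist z' y"
      using embed[where \<theta>=\<theta>, OF ne _ z'a, of "s @ [a] @ t"] by auto
    have ya: "y \<in> iterW \<theta> (k0 + m + k) [a]" using iterW_mono_sub sat y(1) by blast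
    define K where "K = k0 + m + k - 1"
    have KK: "k0 + m + k = Suc K" unfolding K_def using k0 by simp
    have wy: "sublist w y" using v(2) z'(2) y(2) sublist_order.order.trans by blast
    then obtain p q where pq: "y = p @ w @ q" unfolding sublist_def by blast
    show ?thesis
    proof (rule exI[of _ "length q"], intro allI impI)
      fix n assume n: "length q \<le> n"
      define d where "d = n - length q"
      define j where "j = Suc d"
      define z3 where "z3 = sig \<theta> K (Rw \<theta> k t j)"
      have "j \<le> length z3" unfolding z3_def using ne nn tne by (rule RwS_len)
      hence "d < length z3" unfolding j_def by simp
      then obtain \<rho> where \<rho>: "\<rho> \<in> subst_word \<theta> z3" "d < length \<rho>" "\<rho> ! d = A0" using posA by blast
      have \<rho>m: "\<rho> \<in> iterW \<theta> (Suc K) (Rw \<theta> k t j)"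
        unfolding iterW_Suc subst_set_def z3_def using \<rho>(1) sig_mem[where \<theta>=\<theta>, OF ne] z3_def by blast
      define Z where "Z = sig \<theta> (Suc K) (Lw \<theta> k s j) @ y @ \<rho>"
      have "Z \<in> iterW \<theta> (Suc K) (Lw \<theta> k s j @ [a] @ Rw \<theta> k t j)"
        unfolding Z_def using ya \<rho>m KK by (intro app_mem sig_mem[where \<theta>=\<theta>, OF ne]) auto
      hence Za: "Z \<in> iterW \<theta> (Suc K + k * j) [a]" using iterW_mono_sub W_mem[where \<theta>=\<theta>, OF ne sat] by blast
      define u where "u = q @ take d \<rho>"
      have "Z = (sig \<theta> (Suc K) (Lw \<theta> k s j) @ p) @ (w @ u @ [A0]) @ drop (Suc d) \<rho>"
        unfolding Z_def u_def pq using id_take_nth_drop[OF \<rho>(2)] \<rho>(3) by simp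
      hence "sublist (w @ u @ [A0]) Z" by (metis sublist_appendI)
      hence "w @ u @ [A0] \<in> lang ?X"
        apply -
        apply (rule lemmaG[where \<theta>=\<theta> and y=Z])
              apply (rule ne) apply (erule nn) apply (rule sat) apply (rule sne) apply (rule tne)
        apply (rule Za) by assumption
      moreover have "length u = n" unfolding u_def d_def using \<rho>(2) n by (simp add: d_def)
      ultimately show "\<exists>u s'. length u = n \<and> s' \<in> {[A0]} \<and> w @ u @ s' \<in> lang ?X" by blast
    qed
  qed
  have sub: "{[A0]} \<subset> lang_len ?X 1"
  proof -
    have "[A0] \<in> lang_len ?X 1" "[b] \<in> lang_len ?X 1" using letter by (auto simp: lang_len_def)
    thus ?thesis using other by blast
  qed
  show ?thesis unfolding semi_mixing_def using sub mix by blast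
qed


lemma posA_gen:
  assumes ne: "\<And>x. \<theta> x \<noteq> {}" and nn: "\<And>x e. e \<in> \<theta> x \<Longrightarrow> e \<noteq> []"
    and hl: "\<And>x e q. e \<in> \<theta> x \<Longrightarrow> q < length e \<Longrightarrow> \<exists>e'\<in>\<theta> x. length e' = length e \<and> e' ! q = A0"
  shows "p < length z \<Longrightarrow> \<exists>\<rho>\<in>subst_word \<theta> z. p < length \<rho> \<and> \<rho> ! p = A0"
proof (induction z arbitrary: p)
  case Nil thus ?case by simp
next
  case (Cons x z)
  obtain e where e: "e \<in> \<theta> x" using ne by blast
  obtain r where r: "r \<in> subst_word \<theta> z" using subst_word_ne[where \<theta>=\<theta>, OF ne] by blast
  show ?case
  proof (cases "p < length e")
    case True
    then obtain e' where e': "e' \<in> \<theta> x" "length e' = length e" "e' ! p = A0" using hl e by blast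
    have mem: "e' @ r \<in> subst_word \<theta> (x # z)" using e' r by auto
    have "p < length (e' @ r) \<and> (e' @ r) ! p = A0" using e' True by (auto simp: nth_append)
    thus ?thesis using mem by blast
  next
    case False
    have "e \<noteq> []" using nn e by blast
    hence "p - length e < length z" using False Cons.prems by (cases e) auto
    then obtain r' where r': "r' \<in> subst_word \<theta> z" "p - length e < length r'" "r' ! (p - length e) = A0"
      using Cons.IH by blast
    have mem: "e @ r' \<in> subst_word \<theta> (x # z)" using e r' by auto
    have "p < length (e @ r') \<and> (e @ r') ! p = A0" using r' False by (auto simp: nth_append)
    thus ?thesis using mem by blast
  qed
qed

lemma iter_step: "y \<in> iterW \<theta> K z \<Longrightarrow> e \<in> subst_word \<theta> y \<Longrightarrow> e \<in> iterW \<theta> (Suc K) z"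
  unfolding iterW_Suc subst_set_def by blast

lemma iter_step2: "y \<in> iterW \<theta> 1 z \<Longrightarrow> e \<in> subst_word \<theta> y \<Longrightarrow> e \<in> iterW \<theta> 2 z"
  using iter_step[of y \<theta> 1 z e] by (simp add: numeral_2_eq_2)

lemma cons_mem: "u \<in> \<theta> x \<Longrightarrow> v \<in> subst_word \<theta> z \<Longrightarrow> u @ v \<in> subst_word \<theta> (x # z)"
  by (simp only: subst_word.simps mem_Collect_eq) blast

lemma fib_part: "semi_mixing (subshift fib_subst) {[A]} 1"
proof -
  have ne: "\<And>x. fib_subst x \<noteq> {}" by (case_tac x) auto
  have nn: "\<And>x e. e \<in> fib_subst x \<Longrightarrow> e \<noteq> []" by (case_tac x) auto
  have i1: "[B, A] \<in> iterW fib_subst 1 [A]" by (auto simp: iterW_Suc subst_set_def)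
  have i1': "[A, B] \<in> iterW fib_subst 1 [A]" by (auto simp: iterW_Suc subst_set_def)
  have "[A, A, B] \<in> subst_word fib_subst [B, A]" by auto
  hence "[A, A, B] \<in> iterW fib_subst 2 [A]" by (rule iter_step2[OF i1])
  hence sat: "[A] @ [A] @ [B] \<in> iterW fib_subst 2 [A]" by simp
  have reach: "\<exists>m z. z \<in> iterW fib_subst m [A] \<and> c \<in> set z" for c
    using i1' by (cases c) (auto intro!: exI[of _ 0] exI[of _ 1])
  have hl: "\<exists>e'\<in>fib_subst x. length e' = length e \<and> e' ! q = A"
    if "e \<in> fib_subst x" "q < length e" for x e q
    using that by (cases x) (auto simp: less_Suc_eq)
  show ?thesis
    apply (rule generic_semi_mixing[where b=B])
           apply (rule ne) apply (erule nn) apply (rule sat) apply simp apply simp apply (rule reach)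
     apply (rule posA_gen) apply (rule ne) apply (erule nn) apply (rule hl) apply assumption+
    by simp
qed

lemma trib_part: "semi_mixing (subshift trib_subst) {[A3]} 1"
proof -
  have ne: "\<And>x. trib_subst x \<noteq> {}" by (case_tac x) auto
  have nn: "\<And>x e. e \<in> trib_subst x \<Longrightarrow> e \<noteq> []" by (case_tac x) auto
  have i1: "[B3, A3] \<in> iterW trib_subst 1 [A3]" by (auto simp: iterW_Suc subst_set_def)
  have "[A3, C3] @ [A3, B3] @ [] \<in> subst_word trib_subst [B3, A3]"
    by (intro cons_mem) auto
  hence "[A3, C3, A3, B3] \<in> subst_word trib_subst [B3, A3]" by simp
  hence sat0: "[A3, C3, A3, B3] \<in> iterW trib_subst 2 [A3]" by (rule iter_step2[OF i1])
  hence sat: "[A3, C3] @ [A3] @ [B3] \<in> iterW trib_subst 2 [A3]" by simp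
  have reach: "\<exists>m z. z \<in> iterW trib_subst m [A3] \<and> c \<in> set z" for c
    using sat0 by (cases c) (auto intro!: exI[of _ 2])
  have hl: "\<exists>e'\<in>trib_subst x. length e' = length e \<and> e' ! q = A3"
    if "e \<in> trib_subst x" "q < length e" for x e q
    using that by (cases x) (auto simp: less_Suc_eq)
  show ?thesis
    apply (rule generic_semi_mixing[where b=B3])
           apply (rule ne) apply (erule nn) apply (rule sat) apply simp apply simp apply (rule reach)
     apply (rule posA_gen) apply (rule ne) apply (erule nn) apply (rule hl) apply assumption+
    by simp
qed

lemma metal_mem: "i \<le> m \<Longrightarrow> replicate i A @ [B] @ replicate (m - i) A \<in> metallic_subst m A"
  by (simp only: metallic_subst.simps mem_Collect_eq) blast

lemma metal_part:
  fixes m :: nat assumes m: "m \<ge> 2"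
  shows "semi_mixing (subshift (metallic_subst m)) {[A]} 1"
proof -
  let ?\<theta> = "metallic_subst m"
  have ne: "\<And>x. ?\<theta> x \<noteq> {}" by (case_tac x) auto
  have nn: "\<And>x e. e \<in> ?\<theta> x \<Longrightarrow> e \<noteq> []" by (case_tac x) auto
  have e0: "replicate 0 A @ [B] @ replicate (m - 0) A \<in> ?\<theta> A" by (rule metal_mem) simp
  have eq: "replicate 0 A @ [B] @ replicate (m - 0) A = [B] @ [A] @ replicate (m - 1) A"
    using m by (cases m) auto
  have "[B] @ [A] @ replicate (m - 1) A \<in> subst_word ?\<theta> [A]"
    using cons_mem[where \<theta>="?\<theta>" and x=A and z="[]" and v="[]", OF e0[unfolded eq]] by simp
  hence sat: "[B] @ [A] @ replicate (m - 1) A \<in> iterW ?\<theta> 1 [A]"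
    using iter_step[of "[A]" ?\<theta> 0 "[A]"] by simp
  have reach: "\<exists>k z. z \<in> iterW ?\<theta> k [A] \<and> c \<in> set z" for c
    using sat by (cases c) (auto intro!: exI[of _ 0] exI[of _ 1])
  have hl: "\<exists>e'\<in>?\<theta> x. length e' = length e \<and> e' ! q = A"
    if "e \<in> ?\<theta> x" "q < length e" for x e q
  proof (cases x)
    case A
    have "e \<in> metallic_subst m A" using that(1) A by simp
    then obtain i where i: "i \<le> m" "e = replicate i A @ [B] @ replicate (m - i) A"
      by (simp only: metallic_subst.simps mem_Collect_eq) blast
    hence le: "length e = Suc m" by simp
    show ?thesis
    proof (cases q)
      case 0
      have "replicate 1 A @ [B] @ replicate (m - 1) A \<in> ?\<theta> x" using A m metal_mem[of 1 m] by simp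
      hence "[A] @ [B] @ replicate (m - 1) A \<in> ?\<theta> x" by simp
      thus ?thesis using le 0 m by (auto intro!: bexI[of _ "[A] @ [B] @ replicate (m - 1) A"])
    next
      case (Suc q')
      have "replicate 0 A @ [B] @ replicate (m - 0) A \<in> ?\<theta> x" using A metal_mem[of 0 m] by simp
      hence "[B] @ replicate m A \<in> ?\<theta> x" by simp
      moreover have "q' < m" using Suc that(2) le by simp
      ultimately show ?thesis using le Suc by (auto intro!: bexI[of _ "[B] @ replicate m A"])
    qed
  next
    case B thus ?thesis using that by auto
  qed
  show ?thesis
    apply (rule generic_semi_mixing[where b=B])
           apply (rule ne) apply (erule nn) apply (rule sat) apply simp using m apply simp apply (rule reach)
     apply (rule posA_gen) apply (rule ne) apply (erule nn) apply (rule hl) apply assumption+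
    by simp
qed

theorem mainTheorem2:
  shows "semi_mixing (subshift fib_subst) {[A]} 1
       \<and> semi_mixing (subshift trib_subst) {[A3]} 1
       \<and> (\<forall>m::nat. m \<ge> 2 \<longrightarrow> semi_mixing (subshift (metallic_subst m)) {[A]} 1)"
  using fib_part trib_part metal_part by blast

end
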